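(* Let $k\ge0$, let $\eta$ be an $\mathbb S^{2^k}$-invariant Borel probability measure on $I^{\mathbb Z}$, and suppose $D_k[\eta]$ is ergodic with respect to $\mathbb S\times\mathbb O$. Then for every $n>k$, the number $\varrho_n=e^{2\pi i/2^n}$ is not an eigenvalue of $\mathbb S$ (of the operator $f\mapsto f\circ\mathbb S$) on $L^2(I^{\mathbb Z},\theta_0[D_k[\eta]])$.
   Context: $I=\{0,1\}$. $\mathbb S$ is the left shift on $I^{\mathbb Z}$; $\mathbb S^j\eta$ denotes pushforward. $I^{\mathbb N}$ is the space of $0$–$1$ sequences $(\alpha_i)_{i\ge1}$ with uniform Bernoulli measure $m$; $\mathbb O$ is the odometer (if $\alpha_1=\dots=\alpha_{n-1}=1$, $\alpha_n=0$, then $\mathbb O[\alpha]_i=0$ for $i<n$, $\mathbb O[\alpha]_n=1$, $\mathbb O[\alpha]_i=\alpha_i$ for $i>n$). $A_{r,k}=\{\alpha:\sum_{i=1}^k\alpha_i2^{i-1}=r\}$. $D_k[\eta]=\sum_{i=0}^{2^k-1}\mathbb S^i\eta\times(\chi_{A_{i,k}}m)$. $\theta_0[\nu]$ denotes the projection of a measure $\nu$ on $I^{\mathbb Z}\times I^{\mathbb N}$ to $I^{\mathbb Z}$; thus $\theta_0[D_k[\eta]]=2^{-k}\sum_{i=0}^{2^k-1}\mathbb S^i\eta$. *)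

theory Defs
  imports "HOL-Probability.Probability"
begin

text \<open>The space I^Z (two-sided 0-1 sequences) with its product (= Borel) sigma algebra.\<close>
definition Zsp :: "(int \<Rightarrow> bool) measure" where
  "Zsp = Pi\<^sub>M UNIV (\<lambda>_. count_space UNIV)"

text \<open>The space I^N; index j :: nat stands for the paper's coordinate alpha_(j+1).
  m is the uniform Bernoulli product measure.\<close>
definition m_meas :: "(nat \<Rightarrow> bool) measure" where
  "m_meas = Pi\<^sub>M UNIV (\<lambda>_. measure_pmf (bernoulli_pmf (1/2)))"

definition shiftS :: "(int \<Rightarrow> bool) \<Rightarrow> (int \<Rightarrow> bool)" where
  "shiftS x = (\<lambda>i. x (i + 1))"

text \<open>Odometer (adding one with carry); on the all-ones sequence (a null set) it gives all zeros.\<close>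
definition odometer :: "(nat \<Rightarrow> bool) \<Rightarrow> (nat \<Rightarrow> bool)" where
  "odometer a = (if \<exists>n. \<not> a n then
      (let n = (LEAST n. \<not> a n) in (\<lambda>i. if i < n then False else if i = n then True else a i))
    else (\<lambda>_. False))"

definition A_set :: "nat \<Rightarrow> nat \<Rightarrow> (nat \<Rightarrow> bool) set" where
  "A_set r k = {a. (\<Sum>i<k. (if a i then 2 ^ i else 0)) = r}"

definition D_meas :: "nat \<Rightarrow> (int \<Rightarrow> bool) measure \<Rightarrow> ((int \<Rightarrow> bool) \<times> (nat \<Rightarrow> bool)) measure" where
  "D_meas k \<eta> = measure_of (space (Zsp \<Otimes>\<^sub>M m_meas)) (sets (Zsp \<Otimes>\<^sub>M m_meas))
     (\<lambda>X. \<Sum>i<2^k. emeasure (distr \<eta> Zsp (shiftS ^^ i) \<Otimes>\<^sub>M density m_meas (indicator (A_set i k))) X)"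

definition theta0 :: "((int \<Rightarrow> bool) \<times> (nat \<Rightarrow> bool)) measure \<Rightarrow> (int \<Rightarrow> bool) measure" where
  "theta0 \<nu> = distr \<nu> Zsp fst"

definition ergodic :: "'a measure \<Rightarrow> ('a \<Rightarrow> 'a) \<Rightarrow> bool" where
  "ergodic M T \<longleftrightarrow> prob_space M \<and> T \<in> measurable M M \<and> distr M M T = M \<and>
     (\<forall>A\<in>sets M. T -` A \<inter> space M = A \<longrightarrow> measure M A = 0 \<or> measure M A = 1)"

definition koopman_eigenvalue :: "'a measure \<Rightarrow> ('a \<Rightarrow> 'a) \<Rightarrow> complex \<Rightarrow> bool" where
  "koopman_eigenvalue M T c \<longleftrightarrow> (\<exists>f :: 'a \<Rightarrow> complex.
      f \<in> borel_measurable M \<and> integrable M (\<lambda>x. (cmod (f x))\<^sup>2) \<and>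
      \<not> (AE x in M. f x = 0) \<and> (AE x in M. f (T x) = c * f x))"

end

theory Submission
  imports Defs
begin


lemma odometer_bit: "odometer a i = (a i \<noteq> (\<forall>j<i. a j))"
proof (cases "\<exists>n. \<not> a n")
  case True
  define n0 where "n0 = (LEAST n. \<not> a n)"
  have n0: "\<not> a n0" unfolding n0_def using True by (metis LeastI)
  have lt: "j < n0 \<Longrightarrow> a j" for j unfolding n0_def using not_less_Least by blast
  have "odometer a = (\<lambda>i. if i < n0 then False else if i = n0 then True else a i)"
    using True unfolding odometer_def n0_def by (simp add: Let_def)
  then show ?thesis using n0 lt
    by (cases "i < n0"; cases "i = n0") (auto, meson linorder_neqE_nat)
next
  case False
  then show ?thesis unfolding odometer_def by auto
qed

definition sN :: "nat \<Rightarrow> (nat \<Rightarrow> bool) \<Rightarrow> nat" where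
  "sN N a = (\<Sum>i<N. if a i then 2 ^ i else 0)"

lemma adder: "sN N a + 1 = sN N (odometer a) + (if \<forall>j<N. a j then 2 ^ N else 0)"
proof (induction N)
  case 0 then show ?case by (simp add: sN_def)
next
  case (Suc N)
  have c: "(\<forall>j<Suc N. a j) = ((\<forall>j<N. a j) \<and> a N)" using less_Suc_eq by auto
  show ?case using Suc unfolding sN_def
    by (auto simp: odometer_bit c)
qed

lemma inv_set:
  assumes erg: "ergodic M T" and A: "A \<in> sets M"
    and ae: "AE z in M. (T z \<in> A \<longleftrightarrow> z \<in> A)"
  shows "measure M A = 0 \<or> measure M A = 1"
proof -
  have Tm: "T \<in> measurable M M" and pres: "distr M M T = M"
    and erg': "\<And>B. B \<in> sets M \<Longrightarrow> T -` B \<inter> space M = B \<Longrightarrow> measure M B = 0 \<or> measure M B = 1"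
    using erg unfolding ergodic_def by auto
  have Tmm: "(T ^^ m) \<in> measurable M M" for m
    by (induction m) (auto intro: measurable_compose[OF _ Tm])
  have presm: "distr M M (T ^^ m) = M" for m
  proof (induction m)
    case 0 then show ?case by (simp add: distr_id2)
  next
    case (Suc m)
    have "distr M M (T ^^ Suc m) = distr (distr M M (T ^^ m)) M T"
      by (subst distr_distr[OF Tm Tmm]) (simp add: comp_def)
    then show ?case using Suc pres by (simp add: comp_def)
  qed
  have step: "AE z in M. ((T ^^ Suc m) z \<in> A \<longleftrightarrow> (T ^^ m) z \<in> A)" for m
  proof -
    have "AE z in distr M M (T ^^ m). (T z \<in> A \<longleftrightarrow> z \<in> A)" by (subst presm) (rule ae)
    from AE_distrD[OF Tmm this] show ?thesis by simp
  qed
  have all: "AE z in M. \<forall>m. ((T ^^ m) z \<in> A \<longleftrightarrow> z \<in> A)"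
  proof -
    have "AE z in M. \<forall>m. ((T ^^ Suc m) z \<in> A \<longleftrightarrow> (T ^^ m) z \<in> A)"
      using step by (simp add: AE_all_countable)
    then show ?thesis
    proof (rule AE_mp, intro AE_I2 impI allI)
      fix z m assume h: "\<forall>m. ((T ^^ Suc m) z \<in> A \<longleftrightarrow> (T ^^ m) z \<in> A)"
      show "(T ^^ m) z \<in> A \<longleftrightarrow> z \<in> A" by (induction m) (use h in auto)
    qed
  qed
  define B where "B = (\<Inter>N. \<Union>m\<in>{N..}. (T ^^ m) -` A \<inter> space M)"
  have Bs: "B \<in> sets M" unfolding B_def
    using Tmm A by (intro sets.countable_INT' sets.countable_UN') auto
  have Bsp: "B \<subseteq> space M" unfolding B_def by auto
  have Bc: "z \<in> B \<longleftrightarrow> z \<in> space M \<and> (\<forall>N. \<exists>m\<ge>N. (T ^^ m) z \<in> A)" for z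
    unfolding B_def by auto
  have "T -` B \<inter> space M = B"
  proof (intro set_eqI iffI)
    fix z assume z: "z \<in> T -` B \<inter> space M"
    show "z \<in> B" unfolding Bc
    proof (intro conjI allI)
      show "z \<in> space M" using z by auto
      fix N
      from z have "\<exists>m\<ge>N. (T ^^ m) (T z) \<in> A" using Bc[of "T z"] by auto
      then obtain m where "m \<ge> N" "(T ^^ m) (T z) \<in> A" by auto
      then show "\<exists>m\<ge>N. (T ^^ m) z \<in> A"
        by (intro exI[of _ "Suc m"]) (auto simp: funpow_swap1)
    qed
  next
    fix z assume z: "z \<in> B"
    then have zs: "z \<in> space M" using Bsp by auto
    then have Tz: "T z \<in> space M" using measurable_space[OF Tm] by auto
    have "T z \<in> B" unfolding Bc
    proof (intro conjI allI Tz)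
      fix N
      from z have "\<exists>m\<ge>Suc N. (T ^^ m) z \<in> A" unfolding Bc by auto
      then obtain m where "m \<ge> Suc N" "(T ^^ m) z \<in> A" by auto
      then show "\<exists>m\<ge>N. (T ^^ m) (T z) \<in> A"
        by (intro exI[of _ "m - 1"]) (cases m, auto simp: funpow_swap1)
    qed
    then show "z \<in> T -` B \<inter> space M" using zs by auto
  qed
  then have "measure M B = 0 \<or> measure M B = 1" using erg' Bs by auto
  moreover have "measure M B = measure M A"
  proof (rule measure_eq_AE)
    show "AE z in M. z \<in> B \<longleftrightarrow> z \<in> A"
      using all
    proof (rule AE_mp, intro AE_I2 impI)
      fix z assume zs: "z \<in> space M" and h: "\<forall>m. ((T ^^ m) z \<in> A \<longleftrightarrow> z \<in> A)"
      show "z \<in> B \<longleftrightarrow> z \<in> A" unfolding Bc using zs h by auto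
    qed
  qed (use Bs A in auto)
  ultimately show ?thesis by simp
qed



abbreviation "Bern \<equiv> measure_pmf (bernoulli_pmf (1/2))"

lemma m_prob: "prob_space m_meas"
  unfolding m_meas_def by (intro prob_space_PiM prob_space_measure_pmf)

lemma space_m: "space m_meas = UNIV"
  unfolding m_meas_def by (auto simp: space_PiM)

lemma Bern_not: "emeasure Bern (Not -` X) = emeasure Bern X"
proof -
  have "map_pmf Not (bernoulli_pmf (1/2)) = bernoulli_pmf (1/2)"
  proof (rule pmf_eqI)
    fix i :: bool
    have inj: "inj Not" by (auto simp: inj_def)
    have "pmf (map_pmf Not (bernoulli_pmf (1/2))) i = pmf (bernoulli_pmf (1/2)) (\<not> i)"
      using pmf_map_inj'[OF inj, of _ "\<not> i"] by simp
    then show "pmf (map_pmf Not (bernoulli_pmf (1/2))) i = pmf (bernoulli_pmf (1/2)) i"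
      by (cases i) auto
  qed
  then show ?thesis by (metis emeasure_map_pmf)
qed

definition flipk :: "nat \<Rightarrow> (nat \<Rightarrow> bool) \<Rightarrow> (nat \<Rightarrow> bool)" where
  "flipk k a = a(k := \<not> a k)"

lemma flipk_meas: "flipk k \<in> measurable m_meas m_meas"
  unfolding m_meas_def flipk_def
  by (rule measurable_PiM_single') (auto simp: space_PiM)

lemma distr_m_flip: "distr m_meas m_meas (flipk k) = m_meas"
proof -
  have pr: "\<And>i. i \<in> UNIV \<Longrightarrow> prob_space Bern" by (rule prob_space_measure_pmf)
  show ?thesis
  proof (rule measure_eqI_PiM_infinite[of _ UNIV "\<lambda>_. Bern"])
    show "sets (distr m_meas m_meas (flipk k)) = sets (Pi\<^sub>M UNIV (\<lambda>_. Bern))"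
      by (simp add: m_meas_def)
    show "sets m_meas = sets (Pi\<^sub>M UNIV (\<lambda>_. Bern))" by (simp add: m_meas_def)
    show "finite_measure (distr m_meas m_meas (flipk k))"
      using m_prob flipk_meas by (intro prob_space.finite_measure prob_space.prob_space_distr)
    fix A J assume J: "finite (J::nat set)" "J \<subseteq> UNIV" and A: "\<And>i. i \<in> J \<Longrightarrow> A i \<in> sets Bern"
    define A' where "A' i = (if i = k then Not -` A i else A i)" for i
    have pre: "flipk k -` prod_emb UNIV (\<lambda>_. Bern) J (Pi\<^sub>E J A) \<inter> space m_meas
        = prod_emb UNIV (\<lambda>_. Bern) J (Pi\<^sub>E J A')"
      by (auto simp: prod_emb_def space_m A'_def flipk_def PiE_iff split: if_splits)
    have "emeasure (distr m_meas m_meas (flipk k)) (prod_emb UNIV (\<lambda>_. Bern) J (Pi\<^sub>E J A))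
        = emeasure m_meas (prod_emb UNIV (\<lambda>_. Bern) J (Pi\<^sub>E J A'))"
      using J A flipk_meas pre
      by (subst emeasure_distr) (auto simp: m_meas_def intro!: sets_PiM_I)
    also have "\<dots> = (\<Prod>i\<in>J. emeasure Bern (A' i))"
      unfolding m_meas_def using J by (intro emeasure_PiM_emb pr) auto
    also have "\<dots> = (\<Prod>i\<in>J. emeasure Bern (A i))"
      by (rule prod.cong) (auto simp: A'_def Bern_not)
    also have "\<dots> = emeasure m_meas (prod_emb UNIV (\<lambda>_. Bern) J (Pi\<^sub>E J A))"
      unfolding m_meas_def using J A by (intro emeasure_PiM_emb[symmetric] pr) auto
    finally show "emeasure (distr m_meas m_meas (flipk k)) (prod_emb UNIV (\<lambda>_. Bern) J (Pi\<^sub>E J A))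
        = emeasure m_meas (prod_emb UNIV (\<lambda>_. Bern) J (Pi\<^sub>E J A))" .
  qed
qed



lemma shiftS_meas[measurable]: "shiftS \<in> measurable Zsp Zsp"
  unfolding Zsp_def shiftS_def
  by (rule measurable_PiM_single') (auto simp: space_PiM)

lemma comp_meas: "(\<lambda>a. a j) \<in> measurable m_meas (count_space UNIV)"
proof -
  have "(\<lambda>a. a j) \<in> measurable m_meas Bern"
    unfolding m_meas_def by (rule measurable_component_singleton) auto
  moreover have "measurable m_meas Bern = measurable m_meas (count_space UNIV)"
    by (rule measurable_cong_sets) auto
  ultimately show ?thesis by simp
qed

lemma sN_meas[measurable]: "sN N \<in> measurable m_meas (count_space UNIV)"
  unfolding sN_def supply comp_meas[measurable] by measurable

lemma A_set_sN: "A_set r k = {a. sN k a = r}"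
  by (simp add: A_set_def sN_def)

lemma A_set_meas[measurable]: "A_set r k \<in> sets m_meas"
proof -
  have "A_set r k = sN k -` {r} \<inter> space m_meas" by (auto simp: A_set_sN space_m)
  then show ?thesis using sN_meas by (metis measurable_sets sets_UNIV UNIV_I)
qed

abbreviation "Om \<equiv> Zsp \<Otimes>\<^sub>M m_meas"

definition Mi :: "nat \<Rightarrow> (int \<Rightarrow> bool) measure \<Rightarrow> nat \<Rightarrow> ((int \<Rightarrow> bool) \<times> (nat \<Rightarrow> bool)) measure" where
  "Mi k \<eta> i = distr \<eta> Zsp (shiftS ^^ i) \<Otimes>\<^sub>M density m_meas (indicator (A_set i k))"

lemma shift_pow_meas[measurable]: "(shiftS ^^ i) \<in> measurable Zsp Zsp"
  by (induction i) (auto intro: measurable_compose[OF _ shiftS_meas])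

lemma sets_Mi: "sets (Mi k \<eta> i) = sets Om"
  unfolding Mi_def by (rule sets_pair_measure_cong) auto

lemma sets_D: "sets (D_meas k \<eta>) = sets Om"
  unfolding D_meas_def by (rule sets_measure_of_conv[THEN trans]) (simp add: sets.space_closed sets.sigma_sets_eq)

lemma space_D: "space (D_meas k \<eta>) = space Om"
  using sets_D by (rule sets_eq_imp_space_eq)

lemma emeasure_D:
  assumes X: "X \<in> sets Om"
  shows "emeasure (D_meas k \<eta>) X = (\<Sum>i<2^k. emeasure (Mi k \<eta> i) X)"
  unfolding D_meas_def Mi_def[symmetric]
proof (rule emeasure_measure_of_sigma[OF sets.sigma_algebra_axioms _ _ X])
  show "positive (sets Om) (\<lambda>X. \<Sum>i<2 ^ k. emeasure (Mi k \<eta> i) X)"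
    by (simp add: positive_def)
  show "countably_additive (sets Om) (\<lambda>X. \<Sum>i<2 ^ k. emeasure (Mi k \<eta> i) X)"
  proof (rule countably_additiveI)
    fix A :: "nat \<Rightarrow> _" assume A: "range A \<subseteq> sets Om" "disjoint_family A" "\<Union> (range A) \<in> sets Om"
    have "(\<Sum>n. \<Sum>i<2 ^ k. emeasure (Mi k \<eta> i) (A n)) = (\<Sum>i<2 ^ k. \<Sum>n. emeasure (Mi k \<eta> i) (A n))"
      by (rule suminf_sum) auto
    also have "\<dots> = (\<Sum>i<2 ^ k. emeasure (Mi k \<eta> i) (\<Union> (range A)))"
      using A sets_Mi by (intro sum.cong refl suminf_emeasure) auto
    finally show "(\<Sum>n. \<Sum>i<2 ^ k. emeasure (Mi k \<eta> i) (A n)) = (\<Sum>i<2 ^ k. emeasure (Mi k \<eta> i) (\<Union> (range A)))" .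
  qed
qed

lemma flipk_A: "indicator (A_set i k) (flipk k a) = (indicator (A_set i k) a :: ennreal)"
proof -
  have "sN k (flipk k a) = sN k a" unfolding sN_def flipk_def by (intro sum.cong) auto
  then show ?thesis by (simp add: A_set_sN indicator_def)
qed

lemma distr_Mi_flip:
  assumes "sets \<eta> = sets Zsp"
  shows "distr (Mi k \<eta> i) Om (\<lambda>(x, a). (x, flipk k a)) = Mi k \<eta> i"
proof -
  let ?P = "distr \<eta> Zsp (shiftS ^^ i)" and ?Q = "density m_meas (indicator (A_set i k))"
  have Qd: "distr ?Q m_meas (flipk k) = ?Q"
  proof -
    have e: "(\<lambda>x. indicator (A_set i k) (flipk k x)) = (indicator (A_set i k) :: _ \<Rightarrow> ennreal)"
      by (rule ext, rule flipk_A)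
    have "density (distr m_meas m_meas (flipk k)) (indicator (A_set i k))
        = distr (density m_meas (\<lambda>x. indicator (A_set i k) (flipk k x))) m_meas (flipk k)"
      by (rule density_distr) (auto simp: flipk_meas)
    then have "?Q = distr ?Q m_meas (flipk k)" unfolding e distr_m_flip .
    then show ?thesis by (rule sym)
  qed
  have fQ: "finite_measure ?Q"
    using m_prob by (intro finite_measure.finite_measure_restricted prob_space.finite_measure) auto
  have "distr ?P Zsp (\<lambda>x. x) \<Otimes>\<^sub>M distr ?Q m_meas (flipk k)
      = distr (?P \<Otimes>\<^sub>M ?Q) Om (\<lambda>(x, y). (x, flipk k y))"
  proof (rule pair_measure_distr)
    show "(\<lambda>x. x) \<in> ?P \<rightarrow>\<^sub>M Zsp" by simp
    show "flipk k \<in> ?Q \<rightarrow>\<^sub>M m_meas" using flipk_meas by simp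
    show "sigma_finite_measure (distr ?Q m_meas (flipk k))"
      unfolding Qd using fQ by (rule finite_measure.sigma_finite_measure)
  qed
  moreover have "distr ?P Zsp (\<lambda>x. x) = ?P" by (rule distr_id2) simp
  ultimately show ?thesis unfolding Mi_def Qd by simp
qed

lemma D_flip:
  assumes "sets \<eta> = sets Zsp" and X: "X \<in> sets Om"
  shows "emeasure (D_meas k \<eta>) ((\<lambda>(x, a). (x, flipk k a)) -` X \<inter> space Om) = emeasure (D_meas k \<eta>) X"
proof -
  have fm: "(\<lambda>(x, a). (x, flipk k a)) \<in> measurable Om Om"
    unfolding case_prod_beta using flipk_meas
    by (intro measurable_Pair measurable_compose[OF measurable_snd]) auto
  have pre: "(\<lambda>(x, a). (x, flipk k a)) -` X \<inter> space Om \<in> sets Om"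
    using fm X by (rule measurable_sets)
  have "emeasure (D_meas k \<eta>) ((\<lambda>(x, a). (x, flipk k a)) -` X \<inter> space Om)
      = (\<Sum>i<2^k. emeasure (Mi k \<eta> i) ((\<lambda>(x, a). (x, flipk k a)) -` X \<inter> space Om))"
    using pre by (rule emeasure_D)
  also have "\<dots> = (\<Sum>i<2^k. emeasure (distr (Mi k \<eta> i) Om (\<lambda>(x, a). (x, flipk k a))) X)"
  proof (rule sum.cong[OF refl])
    fix i
    have fm': "(\<lambda>(x, a). (x, flipk k a)) \<in> measurable (Mi k \<eta> i) Om"
      using fm by (simp add: measurable_cong_sets[OF sets_Mi refl])
    have "space (Mi k \<eta> i) = space Om" using sets_Mi by (rule sets_eq_imp_space_eq)
    then show "emeasure (Mi k \<eta> i) ((\<lambda>(x, a). (x, flipk k a)) -` X \<inter> space Om)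
        = emeasure (distr (Mi k \<eta> i) Om (\<lambda>(x, a). (x, flipk k a))) X"
      using emeasure_distr[OF fm' X] by simp
  qed
  also have "\<dots> = (\<Sum>i<2^k. emeasure (Mi k \<eta> i) X)"
    using distr_Mi_flip[OF assms(1)] by simp
  also have "\<dots> = emeasure (D_meas k \<eta>) X" using X by (rule emeasure_D[symmetric])
  finally show ?thesis .
qed



lemma cis_add_2pi: "cis (u + 2 * pi) = cis u"
  by (simp add: cis.ctr complex_eq_iff)
lemma cis_add_pi: "cis (u + pi) = - cis u"
  by (simp add: cis.ctr complex_eq_iff)
lemma cis_sub_pi: "cis (u - pi) = - cis u"
  by (simp add: cis.ctr complex_eq_iff)

lemma aux0: "-(pi/2^k)*((y::real) + 1 - 2^Suc k) = (-(pi/2^k)*y + -(pi/2^k)) + 2*pi"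
proof -
  have "(pi/2^k) * 2^Suc k = 2*pi" by simp
  then show ?thesis by (simp add: right_diff_distrib distrib_left)
qed
lemma aux1: "(x::real) = y + 1 - 2^Suc k \<Longrightarrow> -(pi/2^k)*x = (-(pi/2^k)*y + -(pi/2^k)) + 2*pi"
  using aux0 by simp
lemma aux2: "(x::real) = y + 1 \<Longrightarrow> -(pi/2^k)*x = (-(pi/2^k)*y + -(pi/2^k))"
  by (simp add: distrib_left)

lemma K1: "cis (-(pi/2^k) * real (sN (Suc k) (odometer a))) = cis (-(pi/2^k) * real (sN (Suc k) a)) * cis (-(pi/2^k))"
proof -
  let ?c = "\<forall>j<Suc k. a j"
  have t: "(pi/2^k) * 2^Suc k = 2*pi" by simp
  show ?thesis
  proof (cases ?c)
    case True
    have "-(pi/2^k) * real (sN (Suc k) (odometer a)) = (-(pi/2^k) * real (sN (Suc k) a) + -(pi/2^k)) + 2*pi"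
    proof -
      have "sN (Suc k) a + 1 = sN (Suc k) (odometer a) + 2^Suc k" using adder[of "Suc k" a] True by simp
      from arg_cong[OF this, of real]
      have "real (sN (Suc k) (odometer a)) = real (sN (Suc k) a) + 1 - 2^Suc k" by simp
      then show ?thesis by (rule aux1)
    qed
    then show ?thesis by (simp only: cis_add_2pi cis_mult)
  next
    case False
    have "-(pi/2^k) * real (sN (Suc k) (odometer a)) = (-(pi/2^k) * real (sN (Suc k) a) + -(pi/2^k))"
    proof -
      have "sN (Suc k) a + 1 = sN (Suc k) (odometer a)" using adder[of "Suc k" a] False by simp
      from arg_cong[OF this, of real]
      have "real (sN (Suc k) (odometer a)) = real (sN (Suc k) a) + 1" by simp
      then show ?thesis by (rule aux2)
    qed
    then show ?thesis by (simp only: cis_mult)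
  qed
qed

lemma K2: "cis (-(pi/2^k) * real (sN (Suc k) (flipk k a))) = - cis (-(pi/2^k) * real (sN (Suc k) a))"
proof -
  have s1: "sN k (flipk k a) = sN k a" unfolding sN_def flipk_def by (intro sum.cong) auto
  have s2: "sN (Suc k) b = sN k b + (if b k then 2^k else 0)" for b unfolding sN_def by simp
  have t: "(pi/2^k) * 2^k = pi" by simp
  show ?thesis
  proof (cases "a k")
    case True
    then have "-(pi/2^k) * real (sN (Suc k) (flipk k a)) = -(pi/2^k) * real (sN (Suc k) a) + pi"
      using s1 s2[of a] s2[of "flipk k a"] t by (simp add: flipk_def algebra_simps)
    then show ?thesis by (simp only: cis_add_pi)
  next
    case False
    then have "-(pi/2^k) * real (sN (Suc k) (flipk k a)) = -(pi/2^k) * real (sN (Suc k) a) - pi"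
      using s1 s2[of a] s2[of "flipk k a"] t by (simp add: flipk_def algebra_simps)
    then show ?thesis by (simp only: cis_sub_pi)
  qed
qed



theorem lemma8:
  fixes k n :: nat and \<eta> :: "(int \<Rightarrow> bool) measure"
  assumes "prob_space \<eta>"
    and "sets \<eta> = sets Zsp"
    and "distr \<eta> Zsp (shiftS ^^ (2 ^ k)) = \<eta>"
    and "ergodic (D_meas k \<eta>) (\<lambda>(x, a). (shiftS x, odometer a))"
    and "n > k"
  shows "\<not> koopman_eigenvalue (theta0 (D_meas k \<eta>)) shiftS (cis (2 * pi / 2 ^ n))"
proof
  assume ke: "koopman_eigenvalue (theta0 (D_meas k \<eta>)) shiftS (cis (2 * pi / 2 ^ n))"
  define D where "D = D_meas k \<eta>"
  define T where "T = (\<lambda>(x::int\<Rightarrow>bool, a::nat\<Rightarrow>bool). (shiftS x, odometer a))"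
  define \<nu> where "\<nu> = theta0 D"
  obtain f where fm: "f \<in> borel_measurable \<nu>" and nz: "\<not> (AE x in \<nu>. f x = 0)"
     and eig: "AE x in \<nu>. f (shiftS x) = cis (2 * pi / 2 ^ n) * f x"
    using ke unfolding koopman_eigenvalue_def \<nu>_def D_def by blast
  have erg: "ergodic D T" using assms(4) unfolding D_def T_def .
  interpret D: prob_space D using erg unfolding ergodic_def by blast
  have sD: "sets D = sets Om" unfolding D_def by (rule sets_D)
  have spD: "space D = space Om" unfolding D_def by (rule space_D)
  have fstm[measurable]: "fst \<in> measurable D Zsp"
    unfolding measurable_cong_sets[OF sD refl] by (rule measurable_fst)
  have sndm[measurable]: "snd \<in> measurable D m_meas"
    unfolding measurable_cong_sets[OF sD refl] by (rule measurable_snd)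
  have \<nu>_eq: "\<nu> = distr D Zsp fst" unfolding \<nu>_def theta0_def ..
  have fmZ[measurable]: "f \<in> borel_measurable Zsp"
  proof -
    have "sets \<nu> = sets Zsp" unfolding \<nu>_eq by simp
    from fm show ?thesis unfolding measurable_cong_sets[OF \<open>sets \<nu> = sets Zsp\<close> refl] .
  qed
  define \<theta> where "\<theta> = pi / 2^k"
  define p where "p = (2::nat)^(n-k-1)"
  define g where "g x = f x ^ p" for x
  have cp: "(cis (2 * pi / 2 ^ n)) ^ p = cis \<theta>"
  proof -
    have "n = (n-k-1) + 1 + k" using assms(5) by arith
    then have "(2::real)^n = 2^(n-k-1) * 2 * 2^k" by (metis power_add power_one_right)
    then have "real p * (2 * pi / 2 ^ n) = \<theta>" unfolding p_def \<theta>_def by (simp add: field_simps)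
    then show ?thesis by (simp add: Complex.DeMoivre)
  qed
  have gm[measurable]: "g \<in> borel_measurable Zsp" unfolding g_def by measurable
  have eigg: "AE x in \<nu>. g (shiftS x) = cis \<theta> * g x"
    using eig by eventually_elim (simp add: g_def power_mult_distrib cp)
  have eigD: "AE z in D. g (shiftS (fst z)) = cis \<theta> * g (fst z)"
  proof -
    have "{x \<in> space Zsp. g (shiftS x) = cis \<theta> * g x} = {x \<in> space Zsp. Re (g (shiftS x)) = Re (cis \<theta> * g x) \<and> Im (g (shiftS x)) = Im (cis \<theta> * g x)}"
      by (auto simp: complex_eq_iff)
    also have "\<dots> = {x \<in> space Zsp. Re (g (shiftS x)) = Re (cis \<theta> * g x)} \<inter> {x \<in> space Zsp. Im (g (shiftS x)) = Im (cis \<theta> * g x)}"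
      by auto
    also have "\<dots> \<in> sets Zsp"
      by (intro sets.Int borel_measurable_eq) measurable
    finally have pm: "{x \<in> space Zsp. g (shiftS x) = cis \<theta> * g x} \<in> sets Zsp" .
    show ?thesis using eigg unfolding \<nu>_eq AE_distr_iff[OF fstm pm] .
  qed
  define h where "h z = g (fst z) * cis (-\<theta> * real (sN (Suc k) (snd z)))" for z :: "(int\<Rightarrow>bool) \<times> (nat\<Rightarrow>bool)"
  have hm[measurable]: "h \<in> borel_measurable D" unfolding h_def by measurable
  have cc: "cis \<theta> * cis (-\<theta>) = 1" by (simp add: cis_mult)
  have hT: "AE z in D. h (T z) = h z"
    using eigD
  proof eventually_elim
    case (elim z)
    obtain x a where z: "z = (x, a)" by (cases z)
    have "h (T z) = g (shiftS x) * cis (-\<theta> * real (sN (Suc k) (odometer a)))"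
      by (simp add: h_def T_def z)
    also have "\<dots> = (cis \<theta> * g x) * (cis (-\<theta> * real (sN (Suc k) a)) * cis (-\<theta>))"
    proof -
      have K: "cis (-\<theta> * real (sN (Suc k) (odometer a))) = cis (-\<theta> * real (sN (Suc k) a)) * cis (-\<theta>)"
        unfolding \<theta>_def by (rule K1)
      show ?thesis using elim K unfolding z fst_conv by (simp only:)
    qed
    also have "\<dots> = g x * cis (-\<theta> * real (sN (Suc k) a)) * (cis \<theta> * cis (-\<theta>))"
      by (simp add: ac_simps)
    also have "\<dots> = h z" by (simp add: cc h_def z)
    finally show ?case .
  qed
  define HP where "HP w = (0 < Re w \<or> (Re w = 0 \<and> 0 < Im w))" for w :: complex
  have HP1: "HP w \<or> HP (-w) \<longleftrightarrow> w \<noteq> 0" for w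
    unfolding HP_def by (auto simp: complex_eq_iff)
  have HP2: "\<not> (HP w \<and> HP (-w))" for w unfolding HP_def by auto
  have setHP: "{z \<in> space D. HP (F z)} \<in> sets D" if [measurable]: "F \<in> borel_measurable D" for F
  proof -
    have "{z \<in> space D. HP (F z)} = {z \<in> space D. 0 < Re (F z)} \<union> ({z \<in> space D. Re (F z) = 0} \<inter> {z \<in> space D. 0 < Im (F z)})"
      unfolding HP_def by auto
    also have "\<dots> \<in> sets D"
      by (intro sets.Un sets.Int borel_measurable_eq borel_measurable_less) measurable
    finally show ?thesis .
  qed
  define A where "A = {z \<in> space D. HP (h z)}"
  define A' where "A' = {z \<in> space D. HP (- h z)}"
  have As: "A \<in> sets D" unfolding A_def by (rule setHP) (rule hm)
  have A's: "A' \<in> sets D" unfolding A'_def by (rule setHP) measurable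
  have Tm: "T \<in> measurable D D" using erg unfolding ergodic_def by blast
  have "AE z in D. (T z \<in> A \<longleftrightarrow> z \<in> A)"
    using hT
  proof (rule AE_mp, intro AE_I2 impI)
    fix z assume "z \<in> space D" "h (T z) = h z"
    then show "T z \<in> A \<longleftrightarrow> z \<in> A" using measurable_space[OF Tm] unfolding A_def by auto
  qed
  from inv_set[OF erg As this] have A01: "measure D A = 0 \<or> measure D A = 1" .
  define \<tau> where "\<tau> = (\<lambda>(x::int\<Rightarrow>bool, a). (x, flipk k a))"
  have pre: "\<tau> -` A \<inter> space Om = A'"
  proof -
    have "h (\<tau> z) = - h z" for z
    proof -
      obtain x a where z: "z = (x, a)" by (cases z)
      have K: "cis (-\<theta> * real (sN (Suc k) (flipk k a))) = - cis (-\<theta> * real (sN (Suc k) a))"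
        unfolding \<theta>_def by (rule K2)
      show ?thesis unfolding z h_def \<tau>_def by (simp only: K prod.case fst_conv snd_conv mult_minus_right)
    qed
    moreover have "z \<in> space Om \<Longrightarrow> \<tau> z \<in> space Om" for z
      unfolding \<tau>_def by (cases z) (auto simp: space_pair_measure space_m)
    ultimately show ?thesis unfolding A_def A'_def spD by auto
  qed
  have "emeasure D A' = emeasure D A"
  proof -
    have "A \<in> sets Om" using As sD by simp
    from D_flip[OF assms(2) this, of k] show ?thesis unfolding pre[unfolded \<tau>_def] D_def .
  qed
  then have mA': "measure D A' = measure D A" by (simp add: measure_def)
  define N where "N = {z \<in> space D. f (fst z) \<noteq> 0}"
  have hnz: "h z \<noteq> 0 \<longleftrightarrow> f (fst z) \<noteq> 0" for z
    unfolding h_def g_def by (simp add: p_def)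
  have NAA: "N = A \<union> A'" unfolding N_def A_def A'_def using HP1 hnz by auto
  have dis: "A \<inter> A' = {}" unfolding A_def A'_def using HP2 by auto
  have mN: "measure D N = 2 * measure D A"
    unfolding NAA using D.finite_measure_Union[OF As A's dis] mA' by simp
  have f0s: "{x \<in> space Zsp. f x = 0} \<in> sets Zsp"
  proof -
    have "{x \<in> space Zsp. f x = 0} = f -` {0} \<inter> space Zsp" by auto
    also have "\<dots> \<in> sets Zsp" using fmZ by (rule measurable_sets) auto
    finally show ?thesis .
  qed
  have "measure D N \<noteq> 0"
  proof
    assume "measure D N = 0"
    then have "emeasure D N = 0" by (simp add: D.emeasure_eq_measure)
    moreover have "N \<in> sets D" using NAA As A's by auto
    ultimately have "AE z in D. f (fst z) = 0"
      by (subst AE_iff_measurable[of N]) (auto simp: N_def)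
    then have "AE x in \<nu>. f x = 0" unfolding \<nu>_eq AE_distr_iff[OF fstm f0s] .
    with nz show False by simp
  qed
  moreover have "measure D N \<le> 1" by (rule D.prob_le_1)
  ultimately show False using A01 mN by auto
qed

end
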